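(* Let $n\ge9$, let $K$ be an integer with $0\le K\le n/2$, and let $P_K=\min\!\big(\frac{K+\sqrt K}{n},\frac12\big)$. Then, entrywise, $\mathrm{Sen}(\mathcal S)_K\le3e^{20}\cdot\mathrm{Sen}(\tilde{\mathcal N})_{P_K}$.
   Context: Let $\mathbb{I}^n=\{0,1\}^n$ with Hamming distance $d$; operators on $\mathbb{R}^{\mathbb{I}^n}$ are identified with matrices and $A\le B$ means $B-A$ has nonnegative entries. For $0\le k\le n$, $(S_kf)(x)=\binom nk^{-1}\sum_{y:\,d(x,y)=k}f(y)$, and $\mathrm{Sen}(\mathcal S)_K=\frac1{K+1}\sum_{\ell=0}^KS_\ell$. For $p\in[0,1/2]$, $\tilde N_p=\sum_{k=0}^n\binom nkp^k(1-p)^{n-k}S_k$; $\mathrm{Sen}(\tilde{\mathcal N})_P=\frac1P\int_0^P\tilde N_p\,dp$ for $P\in(0,1/2]$, and $\mathrm{Sen}(\tilde{\mathcal N})_0$ is the identity (limit from above). *)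

theory Defs
  imports "HOL-Analysis.Analysis"
begin

text \<open>Points of the cube {0,1}^n are encoded as subsets of {0..<n} (indicator sets).\<close>

definition cube :: "nat \<Rightarrow> nat set set" where
  "cube n = {x. x \<subseteq> {..<n}}"

definition hamming :: "nat set \<Rightarrow> nat set \<Rightarrow> nat" where
  "hamming x y = card ((x - y) \<union> (y - x))"

definition S_op :: "nat \<Rightarrow> nat \<Rightarrow> nat set \<Rightarrow> nat set \<Rightarrow> real" where
  "S_op n k x y = (if hamming x y = k then 1 / real (n choose k) else 0)"

definition Sen_S :: "nat \<Rightarrow> nat \<Rightarrow> nat set \<Rightarrow> nat set \<Rightarrow> real" where
  "Sen_S n K x y = (1 / (real K + 1)) * (\<Sum>l = 0..K. S_op n l x y)"

definition Ntilde :: "nat \<Rightarrow> real \<Rightarrow> nat set \<Rightarrow> nat set \<Rightarrow> real" where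
  "Ntilde n p x y = (\<Sum>k = 0..n. real (n choose k) * p ^ k * (1 - p) ^ (n - k) * S_op n k x y)"

definition Sen_N :: "nat \<Rightarrow> real \<Rightarrow> nat set \<Rightarrow> nat set \<Rightarrow> real" where
  "Sen_N n P x y = (if P = 0 then (if x = y then 1 else 0)
                    else (1 / P) * integral {0..P} (\<lambda>p. Ntilde n p x y))"

end

theory Submission
  imports Defs
begin

definition bp :: "nat \<Rightarrow> real \<Rightarrow> nat \<Rightarrow> real" where
  "bp N P j = real (N choose j) * P ^ j * (1 - P) ^ (N - j)"

lemma S0: "(\<Sum>j\<le>N. bp N P j) = 1"
  using binomial_ring[of P "1 - P" N] by (simp add: bp_def)

lemma bp_Suc: "real (Suc i) * bp (Suc M) P (Suc i) = real (Suc M) * P * bp M P i"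
proof -
  have e0: "Suc i * (Suc M choose Suc i) = Suc M * (M choose i)"
    using binomial_absorption[of i "Suc M"] by simp
  have e: "real (Suc i) * real (Suc M choose Suc i) = real (Suc M) * real (M choose i)"
    by (simp only: of_nat_mult[symmetric] e0)
  have "real (Suc i) * bp (Suc M) P (Suc i) = (real (Suc i) * real (Suc M choose Suc i)) * (P * (P ^ i * (1 - P) ^ (M - i)))"
    unfolding bp_def by (simp add: mult_ac)
  also have "\<dots> = (real (Suc M) * real (M choose i)) * (P * (P ^ i * (1 - P) ^ (M - i)))"
    by (simp only: e)
  also have "\<dots> = real (Suc M) * P * bp M P i" unfolding bp_def by (simp add: mult_ac)
  finally show ?thesis .
qed

lemma S1: "(\<Sum>j\<le>N. real j * bp N P j) = real N * P"
proof (cases N)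
  case 0 then show ?thesis by simp
next
  case (Suc M)
  have "(\<Sum>j\<le>N. real j * bp N P j) = (\<Sum>i\<le>M. real (Suc i) * bp (Suc M) P (Suc i))"
    unfolding Suc by (subst sum.atMost_Suc_shift) simp
  also have "\<dots> = (\<Sum>i\<le>M. real (Suc M) * P * bp M P i)" by (simp only: bp_Suc)
  also have "\<dots> = real (Suc M) * P" by (simp add: sum_distrib_left[symmetric] S0)
  finally show ?thesis using Suc by simp
qed

lemma S2: "(\<Sum>j\<le>N. real j ^ 2 * bp N P j) = real N * P * ((real N - 1) * P + 1)"
proof (cases N)
  case 0 then show ?thesis by simp
next
  case (Suc M)
  have "(\<Sum>j\<le>N. real j ^ 2 * bp N P j) = (\<Sum>i\<le>M. real (Suc i) * (real (Suc i) * bp (Suc M) P (Suc i)))"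
    unfolding Suc by (subst sum.atMost_Suc_shift) (simp add: power2_eq_square mult.assoc)
  also have "\<dots> = (\<Sum>i\<le>M. real (Suc M) * P * (real i * bp M P i + bp M P i))" 
    by (simp only: bp_Suc) (simp add: algebra_simps)
  also have "\<dots> = real (Suc M) * P * (real M * P + 1)"
    by (simp add: sum_distrib_left[symmetric] S0 S1 sum.distrib)
  finally show ?thesis using Suc by simp
qed

lemma S_var: "(\<Sum>j\<le>N. (a - real j) ^ 2 * bp N P j) = (a - real N * P) ^ 2 + real N * P * (1 - P)"
proof -
  have "(\<Sum>j\<le>N. (a - real j) ^ 2 * bp N P j) = a^2 * (\<Sum>j\<le>N. bp N P j) - 2 * a * (\<Sum>j\<le>N. real j * bp N P j) + (\<Sum>j\<le>N. real j ^ 2 * bp N P j)"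
    by (simp add: power2_eq_square algebra_simps sum.distrib sum_subtractf sum_distrib_left)
  also have "\<dots> = (a - real N * P) ^ 2 + real N * P * (1 - P)"
    by (simp add: S0 S1 S2) (simp add: power2_eq_square algebra_simps)
  finally show ?thesis .
qed

lemma bp_nonneg: "0 \<le> P \<Longrightarrow> P \<le> 1 \<Longrightarrow> 0 \<le> bp N P j"
  unfolding bp_def by simp

lemma tail:
  assumes "0 \<le> P" "P \<le> 1" "K \<ge> 1" "real K + sqrt (real K) \<le> real N * P" "K \<le> N"
  shows "(\<Sum>j\<le>K. bp N P j) \<le> 2/3"
proof -
  define \<mu> where "\<mu> = real N * P"
  define t where "t = \<mu> - real K"
  have sK: "sqrt (real K) \<ge> 1" using assms(3) by simp
  have tK: "t \<ge> sqrt (real K)" using assms(4) unfolding t_def \<mu>_def by simp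
  have t1: "t \<ge> 1" using sK tK by linarith
  have t2: "t^2 \<ge> real K"
  proof -
    have "(sqrt (real K))^2 \<le> t^2" using tK sK by (intro power_mono) auto
    then show ?thesis by simp
  qed
  have mu0: "\<mu> \<ge> 0" unfolding \<mu>_def using assms(1) by simp
  have tt: "t \<le> t^2" using t1 mult_left_mono[of 1 t t] by (simp add: power2_eq_square)
  have mu2: "\<mu> \<le> 2 * t^2" using t2 tt unfolding t_def by linarith
  have tpos: "t > 0" using t1 by linarith
  define a where "a = \<mu> + \<mu> / t"
  define c where "c = t + \<mu> / t"
  have c_eq: "c = a - real K" unfolding a_def c_def t_def by simp
  have mt: "\<mu> / t \<ge> 0" using mu0 tpos by simp
  have cpos: "c > 0" unfolding c_def using tpos mt by linarith
  have c_alt: "c = (t^2 + \<mu>) / t" unfolding c_def using tpos by (simp add: field_simps power2_eq_square)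
  have "(\<Sum>j\<le>K. bp N P j) \<le> (\<Sum>j\<le>K. (a - real j)^2 / c^2 * bp N P j)"
  proof (rule sum_mono)
    fix j assume j: "j \<in> {..K}"
    have "c \<le> a - real j" using j c_eq by auto
    then have "c^2 \<le> (a - real j)^2" using cpos by (intro power_mono) auto
    then have "1 \<le> (a - real j)^2 / c^2" using cpos by simp
    then show "bp N P j \<le> (a - real j)^2 / c^2 * bp N P j"
      using bp_nonneg[OF assms(1,2), of N j] mult_right_mono[of 1 "(a - real j)^2 / c^2" "bp N P j"] by simp
  qed
  also have "\<dots> \<le> (\<Sum>j\<le>N. (a - real j)^2 / c^2 * bp N P j)"
    using assms(5) bp_nonneg[OF assms(1,2)] by (intro sum_mono2) auto
  also have "\<dots> = (\<Sum>j\<le>N. (a - real j)^2 * bp N P j) / c^2"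
    by (simp add: sum_divide_distrib)
  also have "\<dots> = ((a - \<mu>)^2 + \<mu> * (1 - P)) / c^2" unfolding S_var \<mu>_def ..
  also have "\<dots> \<le> ((\<mu>/t)^2 + \<mu>) / c^2"
  proof -
    have "\<mu> * (1 - P) \<le> \<mu>" using mu0 assms(1) mult_left_mono[of "1-P" 1 \<mu>] by simp
    moreover have "a - \<mu> = \<mu> / t" unfolding a_def by simp
    ultimately show ?thesis using cpos by (intro divide_right_mono) auto
  qed
  also have "\<dots> = \<mu> / (t^2 + \<mu>)"
  proof -
    have f1: "(\<mu>/t)^2 + \<mu> = \<mu> * (t^2 + \<mu>) / t^2" using tpos by (simp add: field_simps power2_eq_square)
    have f2: "c^2 = (t^2 + \<mu>)^2 / t^2" unfolding c_alt by (simp add: power_divide)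
    have f4: "t^2 > 0" using tpos by simp
    have f3: "t^2 + \<mu> > 0" using f4 mu0 by linarith
    have gen: "\<And>u v w::real. v > 0 \<Longrightarrow> w > 0 \<Longrightarrow> (u * v / w) / (v^2 / w) = u / v"
      by (simp add: field_simps power2_eq_square)
    show ?thesis unfolding f1 f2 by (rule gen[OF f3 f4])
  qed
  also have "\<dots> \<le> 2/3"
  proof -
    have "t^2 > 0" using tpos by simp
    then have "t^2 + \<mu> > 0" using mu0 by linarith
    then show ?thesis using mu2 by (simp add: pos_divide_le_eq)
  qed
  finally show ?thesis .
qed

lemma sym_nat:
  assumes "2 * d \<le> n"
  shows "2 ^ Suc n \<le> 2 * (\<Sum>j=Suc d..Suc n. Suc n choose j)"
proof -
  define N where "N = Suc n"
  have AB: "{Suc d..N} \<union> {0..N - Suc d} = {0..N}" using assms unfolding N_def by auto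
  have "(\<Sum>j=0..N - Suc d. N choose j) = (\<Sum>j=Suc d..N. N choose j)"
  proof (rule sum.reindex_bij_witness[where i="\<lambda>x. N - x" and j="\<lambda>x. N - x"])
    fix a assume a: "a \<in> {0..N - Suc d}"
    then have aN: "a \<le> N" by simp
    show "N - (N - a) = a" using aN by simp
    show "N - a \<in> {Suc d..N}" using a assms unfolding N_def by auto
    show "N choose (N - a) = N choose a" using binomial_symmetric[OF aN] by simp
  next
    fix b assume b: "b \<in> {Suc d..N}"
    then show "N - (N - b) = b" by simp
    show "N - b \<in> {0..N - Suc d}" using b by auto
  qed
  moreover have "(\<Sum>j=0..N. N choose j) \<le> (\<Sum>j=Suc d..N. N choose j) + (\<Sum>j=0..N - Suc d. N choose j)"
    unfolding AB[symmetric] by (subst sum_Un_nat) auto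
  moreover have "(\<Sum>j=0..N. N choose j) = 2 ^ N" using choose_row_sum[of N] by (simp add: atLeast0AtMost)
  ultimately show ?thesis unfolding N_def by simp
qed

lemma one_minus_half: "(1 - 1/2::real) = 1/2" by simp

lemma sym_half:
  assumes "2 * d \<le> n"
  shows "(\<Sum>i=d..n. bp (Suc n) (1/2) (Suc i)) \<ge> 1/2"
proof -
  have "(\<Sum>i=d..n. bp (Suc n) (1/2) (Suc i)) = (\<Sum>j=Suc d..Suc n. bp (Suc n) (1/2) j)"
    by (rule sum.shift_bounds_cl_Suc_ivl[symmetric])
  also have "\<dots> = (\<Sum>j=Suc d..Suc n. real (Suc n choose j) * (1/2)^(Suc n))"
  proof (rule sum.cong)
    fix j assume "j \<in> {Suc d..Suc n}"
    then have jj: "j + (Suc n - j) = Suc n" by simp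
    have "(1/2::real)^j * (1/2)^(Suc n - j) = (1/2)^(j + (Suc n - j))" by (rule power_add[symmetric])
    then have "(1/2::real)^j * (1/2)^(Suc n - j) = (1/2)^(Suc n)" by (simp only: jj)
    then show "bp (Suc n) (1/2) j = real (Suc n choose j) * (1/2)^(Suc n)"
      unfolding bp_def by (simp only: mult.assoc one_minus_half)
  qed simp
  also have "\<dots> = real (\<Sum>j=Suc d..Suc n. Suc n choose j) * (1/2)^(Suc n)"
    by (simp only: sum_distrib_right[symmetric] of_nat_sum)
  also have "\<dots> = real (\<Sum>j=Suc d..Suc n. Suc n choose j) / 2 ^ Suc n"
    by (simp only: power_one_over times_divide_eq_right mult_1_right)
  finally have eq: "(\<Sum>i=d..n. bp (Suc n) (1/2) (Suc i)) = real (\<Sum>j=Suc d..Suc n. Suc n choose j) / 2 ^ Suc n" .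
  have "real (2 ^ Suc n) \<le> real (2 * (\<Sum>j=Suc d..Suc n. Suc n choose j))"
    using sym_nat[OF assms] by (simp only: of_nat_le_iff)
  then have h2: "(2::real) ^ Suc n \<le> 2 * real (\<Sum>j=Suc d..Suc n. Suc n choose j)"
    by (simp only: of_nat_power of_nat_mult of_nat_numeral)
  have pos: "(2::real) ^ Suc n > 0" by simp
  show ?thesis unfolding eq using h2 by (simp only: pos_le_divide_eq[OF pos])
qed

lemma G_deriv:
  assumes "d \<le> n"
  shows "((\<lambda>P. \<Sum>i=d..n. bp (Suc n) P (Suc i)) has_real_derivative (real (Suc n) * bp n P d)) (at P)"
proof -
  define h where "h i = bp n P i" for i
  have trm: "((\<lambda>P. bp (Suc n) P (Suc i)) has_real_derivative (real (Suc n) * (h i - h (Suc i)))) (at P)"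
    if "i \<in> {d..n}" for i
  proof -
    have i: "i \<le> n" using that by simp
    have e1: "real (Suc i) * real (Suc n choose Suc i) = real (Suc n) * real (n choose i)"
    proof -
      have "Suc i * (Suc n choose Suc i) = Suc n * (n choose i)"
        using binomial_absorption[of i "Suc n"] by simp
      then show ?thesis by (simp only: of_nat_mult[symmetric])
    qed
    have e2: "real (n - i) * real (Suc n choose Suc i) = real (Suc n) * real (n choose Suc i)"
    proof -
      have "(n - i) * (Suc n choose Suc i) = Suc n * (n choose Suc i)"
        using binomial_absorb_comp[of "Suc n" "Suc i"] by simp
      then show ?thesis by (simp only: of_nat_mult[symmetric])
    qed
    have ex: "Suc n - Suc i = n - i" by simp
    have ex2: "n - i - 1 = n - Suc i" by simp
    have "((\<lambda>P. real (Suc n choose Suc i) * P ^ Suc i * (1 - P) ^ (n - i)) has_real_derivative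
       real (Suc n choose Suc i) * (real (Suc i) * P ^ i * (1 - P) ^ (n - i) - P ^ Suc i * (real (n - i) * (1 - P) ^ (n - i - 1)))) (at P)"
    proof -
      have d1: "((\<lambda>P. P ^ Suc i) has_real_derivative real (Suc i) * P ^ i) (at P)"
        using DERIV_pow[of "Suc i" P UNIV] by simp
      have dm: "((\<lambda>P. 1 - P) has_real_derivative -1) (at P)"
        using DERIV_diff[OF DERIV_const[of 1] DERIV_ident] by simp
      have d2: "((\<lambda>P. (1 - P) ^ (n - i)) has_real_derivative - (real (n - i) * (1 - P) ^ (n - i - 1))) (at P)"
        using DERIV_power[OF dm, of "n - i"] by simp
      have "((\<lambda>P. P ^ Suc i * (1 - P) ^ (n - i)) has_real_derivative
         (real (Suc i) * P ^ i * (1 - P) ^ (n - i) - P ^ Suc i * (real (n - i) * (1 - P) ^ (n - i - 1)))) (at P)"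
        using DERIV_mult'[OF d1 d2] by (rule DERIV_cong) (simp add: algebra_simps)
      from DERIV_cmult[OF this, of "real (Suc n choose Suc i)"] show ?thesis by (simp add: mult.assoc)
    qed
    moreover have "real (Suc n choose Suc i) * (real (Suc i) * P ^ i * (1 - P) ^ (n - i) - P ^ Suc i * (real (n - i) * (1 - P) ^ (n - i - 1)))
       = real (Suc n) * (h i - h (Suc i))"
    proof -
      have "real (Suc n choose Suc i) * (real (Suc i) * P ^ i * (1 - P) ^ (n - i) - P ^ Suc i * (real (n - i) * (1 - P) ^ (n - i - 1)))
        = (real (Suc i) * real (Suc n choose Suc i)) * P ^ i * (1 - P) ^ (n - i) - (real (n - i) * real (Suc n choose Suc i)) * P ^ Suc i * (1 - P) ^ (n - i - 1)"
        by (simp add: algebra_simps)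
      also have "\<dots> = (real (Suc n) * real (n choose i)) * P ^ i * (1 - P) ^ (n - i) - (real (Suc n) * real (n choose Suc i)) * P ^ Suc i * (1 - P) ^ (n - Suc i)"
        by (simp only: e1 e2 ex2)
      also have "\<dots> = real (Suc n) * (h i - h (Suc i))"
        unfolding h_def bp_def by (simp only: right_diff_distrib mult.assoc)
      finally show ?thesis .
    qed
    ultimately show ?thesis unfolding bp_def ex by simp
  qed
  have "((\<lambda>P. \<Sum>i=d..n. bp (Suc n) P (Suc i)) has_real_derivative (\<Sum>i=d..n. real (Suc n) * (h i - h (Suc i)))) (at P)"
    by (rule DERIV_sum) (rule trm)
  moreover have "(\<Sum>i=d..n. real (Suc n) * (h i - h (Suc i))) = real (Suc n) * bp n P d"
  proof -
    have "(\<Sum>i=d..n. (h i - h (Suc i))) = - (\<Sum>i=d..n. (h (Suc i) - h i))" by (simp add: sum_negf[symmetric])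
    also have "\<dots> = h d - h (Suc n)" using assms by (subst sum_Suc_diff) auto
    also have "\<dots> = h d" unfolding h_def bp_def by simp
    finally show ?thesis by (simp add: sum_distrib_left[symmetric] h_def)
  qed
  ultimately show ?thesis by simp
qed


theorem lemma6:
  fixes n K :: nat and x y :: "nat set"
  assumes "n \<ge> 9" and "real K \<le> real n / 2"
    and "x \<in> cube n" and "y \<in> cube n"
  shows "Sen_S n K x y \<le> 3 * exp 20 * Sen_N n (min ((real K + sqrt (real K)) / real n) (1/2)) x y"
proof -
  define d where "d = hamming x y"
  have xs: "x \<subseteq> {..<n}" "y \<subseteq> {..<n}" using assms(3,4) unfolding cube_def by auto
  have sub: "(x - y) \<union> (y - x) \<subseteq> {..<n}" using xs by auto
  have dn: "d \<le> n" unfolding d_def hamming_def using card_mono[OF _ sub] by simp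
  have d0: "x = y" if "d = 0"
  proof -
    have "finite ((x - y) \<union> (y - x))" using sub finite_subset by blast
    then have "(x - y) \<union> (y - x) = {}" using that unfolding d_def hamming_def by simp
    then show ?thesis by blast
  qed
  define C where "C = real (n choose d)"
  have Cpos: "C > 0" unfolding C_def using dn by simp
  have SenS: "Sen_S n K x y = (if d \<le> K then 1 / ((real K + 1) * C) else 0)"
  proof -
    have "(\<Sum>l = 0..K. S_op n l x y) = (\<Sum>l = 0..K. if d = l then 1 / real (n choose l) else 0)"
      unfolding S_op_def d_def by simp
    also have "\<dots> = (if d \<le> K then 1 / C else 0)" by (simp add: C_def)
    finally show ?thesis unfolding Sen_S_def by simp
  qed
  have Ntil: "Ntilde n p x y = p ^ d * (1 - p) ^ (n - d)" for p
  proof -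
    have "Ntilde n p x y = (\<Sum>k = 0..n. if d = k then real (n choose k) * p ^ k * (1 - p) ^ (n - k) * (1 / real (n choose k)) else 0)"
      unfolding Ntilde_def S_op_def d_def by (rule sum.cong) auto
    also have "\<dots> = real (n choose d) * p ^ d * (1 - p) ^ (n - d) * (1 / real (n choose d))"
      using dn by simp
    also have "\<dots> = p ^ d * (1 - p) ^ (n - d)" using Cpos unfolding C_def by simp
    finally show ?thesis .
  qed
  define P where "P = min ((real K + sqrt (real K)) / real n) (1/2)"
  have e20: "exp (20::real) \<ge> 21" using exp_ge_add_one_self[of 20] by simp
  show ?thesis
  proof (cases "K = 0")
    case True
    then have P0: "P = 0" unfolding P_def by simp
    show ?thesis
    proof (cases "d \<le> K")
      case True
      with \<open>K = 0\<close> have "d = 0" by simp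
      then have "x = y" by (rule d0)
      have "C = 1" unfolding C_def using \<open>d = 0\<close> by simp
      then show ?thesis unfolding SenS P_def[symmetric] P0 Sen_N_def using True \<open>K = 0\<close> \<open>x = y\<close> e20 by simp
    next
      case False
      then show ?thesis unfolding SenS P_def[symmetric] P0 Sen_N_def using e20 by simp
    qed
  next
    case False
    then have K1: "K \<ge> 1" by simp
    have n0: "real n > 0" using assms(1) by simp
    have sK: "sqrt (real K) \<le> real K"
    proof -
      have "sqrt (real K) \<le> sqrt (real K) * sqrt (real K)" using K1 mult_left_mono[of 1 "sqrt (real K)" "sqrt (real K)"] by simp
      then show ?thesis by simp
    qed
    have Kpos: "real K + sqrt (real K) > 0" using K1 by (simp add: add_pos_nonneg)
    have "(real K + sqrt (real K)) / real n > 0" using Kpos n0 by (rule divide_pos_pos)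
    then have Ppos: "P > 0" unfolding P_def by simp
    have Ph: "P \<le> 1/2" unfolding P_def by (rule min.cobounded2)
    have Ple: "P \<le> (real K + sqrt (real K)) / real n" unfolding P_def by (rule min.cobounded1)
    define G where "G = (\<lambda>Q. \<Sum>i=d..n. bp (Suc n) Q (Suc i))"
    have G0: "G 0 = 0" unfolding G_def bp_def by simp
    have ftc: "((\<lambda>p. real (Suc n) * bp n p d) has_integral (G P - G 0)) {0..P}"
    proof (rule fundamental_theorem_of_calculus)
      show "0 \<le> P" using Ppos by simp
    next
      fix p :: real
      have "(G has_real_derivative real (Suc n) * bp n p d) (at p within {0..P})"
        unfolding G_def by (rule has_field_derivative_at_within[OF G_deriv[OF dn]])
      then show "(G has_vector_derivative real (Suc n) * bp n p d) (at p within {0..P})"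
        by (simp only: has_real_derivative_iff_has_vector_derivative)
    qed
    have "((\<lambda>p. real (Suc n) * bp n p d * (1 / (real (Suc n) * C))) has_integral ((G P - G 0) * (1 / (real (Suc n) * C)))) {0..P}"
      by (rule has_integral_mult_left[OF ftc])
    moreover have "(\<lambda>p. real (Suc n) * bp n p d * (1 / (real (Suc n) * C))) = (\<lambda>p. Ntilde n p x y)"
      using Cpos by (auto simp: Ntil bp_def C_def)
    ultimately have hi: "((\<lambda>p. Ntilde n p x y) has_integral (G P / (real (Suc n) * C))) {0..P}"
      by (simp add: G0)
    have SenN: "Sen_N n P x y = (1 / P) * (G P / (real (Suc n) * C))"
      unfolding Sen_N_def using Ppos integral_unique[OF hi] by simp
    show ?thesis
    proof (cases "d \<le> K")
      case False
      have "G P \<ge> 0" unfolding G_def using Ppos Ph by (intro sum_nonneg bp_nonneg) auto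
      then have "Sen_N n P x y \<ge> 0" unfolding SenN using Ppos Cpos by simp
      then show ?thesis unfolding SenS P_def[symmetric] using False by simp
    next
      case True
      have G3: "G P \<ge> 1/3"
      proof (cases "(real K + sqrt (real K)) / real n \<le> 1/2")
        case False
        then have "P = 1/2" unfolding P_def by simp
        moreover have "2 * d \<le> n" using True assms(2) by linarith
        ultimately show ?thesis unfolding G_def using sym_half by fastforce
      next
        case uc: True
        then have PP: "P = (real K + sqrt (real K)) / real n" unfolding P_def by simp
        have KN: "K \<le> Suc n" using assms(2) by linarith
        have hyp: "real K + sqrt (real K) \<le> real (Suc n) * P"
        proof -
          have "real K + sqrt (real K) = real n * P" unfolding PP using n0 by simp
          also have "\<dots> \<le> real (Suc n) * P" using Ppos by simp
          finally show ?thesis .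
        qed
        have tl: "(\<Sum>j\<le>K. bp (Suc n) P j) \<le> 2/3"
          using tail[OF _ _ K1 hyp KN] Ppos Ph by simp
        have split: "(\<Sum>j\<le>Suc n. bp (Suc n) P j) = (\<Sum>j\<le>K. bp (Suc n) P j) + (\<Sum>j=Suc K..Suc n. bp (Suc n) P j)"
        proof -
          have "{..Suc n} = {..K} \<union> {Suc K..Suc n}" using KN by auto
          then show ?thesis by (simp add: sum.union_disjoint)
        qed
        have "G P = (\<Sum>j=Suc d..Suc n. bp (Suc n) P j)"
          unfolding G_def by (rule sum.shift_bounds_cl_Suc_ivl[symmetric])
        also have "\<dots> \<ge> (\<Sum>j=Suc K..Suc n. bp (Suc n) P j)"
          using True Ppos Ph by (intro sum_mono2) (auto intro: bp_nonneg)
        finally show ?thesis using split S0[of "Suc n" P] tl by linarith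
      qed
      have PN: "P * real (Suc n) \<le> 4 * real K"
      proof -
        have "P * real (Suc n) \<le> (real K + sqrt (real K)) / real n * real (Suc n)"
          using Ple by (intro mult_right_mono) auto
        also have "\<dots> = (real K + sqrt (real K)) * (real (Suc n) / real n)" by simp
        also have "\<dots> \<le> (2 * real K) * 2"
        proof (intro mult_mono)
          show "real (Suc n) / real n \<le> 2" using n0 by (simp add: divide_simps)
        qed (use sK in auto)
        finally show ?thesis by simp
      qed
      define E where "E = exp (20::real)"
      have E21: "E \<ge> 21" using e20 unfolding E_def .
      have key: "P * real (Suc n) \<le> 3 * E * G P * (real K + 1)"
      proof -
        have a1: "E * 1 \<le> E * (3 * G P)" using G3 E21 by (intro mult_left_mono) auto
        have a2: "3 * E * G P = E * (3 * G P)" by (simp only: mult_ac)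
        have "3 * E * G P \<ge> 21" using a1 a2 E21 by linarith
        then have "3 * E * G P * (real K + 1) \<ge> 21 * (real K + 1)" by (intro mult_right_mono) auto
        moreover have "4 * real K \<le> 21 * (real K + 1)" by simp
        ultimately show ?thesis using PN by (meson order_trans)
      qed
      have PNpos: "P * real (Suc n) > 0" using Ppos by simp
      have Kp: "real K + 1 > 0" by simp
      have r: "3 * E * ((1 / P) * (G P / (real (Suc n) * C))) = (3 * E * G P * (real K + 1) / (P * real (Suc n))) * (1 / ((real K + 1) * C))"
      proof -
        have gen: "\<And>e g k p m c::real. k > 0 \<Longrightarrow> p > 0 \<Longrightarrow> m > 0 \<Longrightarrow> c > 0 \<Longrightarrow>
           3 * e * ((1/p) * (g/(m*c))) = (3*e*g*k/(p*m)) * (1/(k*c))"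
          by (simp add: field_simps)
        show ?thesis by (rule gen[OF Kp Ppos _ Cpos]) simp
      qed
      have q1: "1 \<le> 3 * E * G P * (real K + 1) / (P * real (Suc n))"
        using key PNpos by (simp add: le_divide_eq)
      have q0: "0 \<le> 1 / ((real K + 1) * C)" using Kp Cpos by simp
      have "Sen_S n K x y = 1 / ((real K + 1) * C)" unfolding SenS using True by simp
      also have "\<dots> = 1 * (1 / ((real K + 1) * C))" by simp
      also have "\<dots> \<le> 3 * E * ((1 / P) * (G P / (real (Suc n) * C)))"
        unfolding r by (rule mult_right_mono[OF q1 q0])
      also have "\<dots> = 3 * exp 20 * Sen_N n P x y" unfolding SenN E_def by simp
      finally show ?thesis unfolding P_def .
    qed
  qed
qed

end
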